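(* Let $X$ be a finite discrete space with at least two elements, $\Gamma$ a nonempty countable set, and $\varphi:\Gamma\to\Gamma$ a map having a non-quasi-periodic point. Then $(X^\Gamma,\sigma_\varphi)$ is uniform distributional chaotic.
   Context: $X^\Gamma$ has the product topology and a fixed compatible metric $d$; $\sigma_\varphi((x_\alpha)_{\alpha\in\Gamma})=(x_{\varphi(\alpha)})_{\alpha\in\Gamma}$. A point $\theta\in\Gamma$ is non-quasi-periodic if $\{\varphi^n(\theta):n\ge0\}$ is infinite. With $f=\sigma_\varphi$, $\xi(x,y,t,n)=\#\{i\in\{0,\dots,n-1\}:d(f^i(x),f^i(y))<t\}$, $F_{xy}(t)=\liminf_n\xi(x,y,t,n)/n$, $F^*_{xy}(t)=\limsup_n\xi(x,y,t,n)/n$. The system is uniform distributional chaotic if there exist an uncountable set $A\subseteq X^\Gamma$ and $\varepsilon>0$ such that for all distinct $x,y\in A$: $F^*_{xy}(s)=1$ for every $s>0$ and $F_{xy}(\varepsilon)=0$. *)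

theory Defs
  imports "HOL-Analysis.Analysis"
begin

definition shift_map :: "('g \<Rightarrow> 'g) \<Rightarrow> 'g set \<Rightarrow> ('g \<Rightarrow> 'a) \<Rightarrow> ('g \<Rightarrow> 'a)" where
  "shift_map \<phi> \<Gamma> x = (\<lambda>\<alpha>\<in>\<Gamma>. x (\<phi> \<alpha>))"

definition non_quasi_periodic :: "('g \<Rightarrow> 'g) \<Rightarrow> 'g \<Rightarrow> bool" where
  "non_quasi_periodic \<phi> \<theta> \<longleftrightarrow> infinite {(\<phi> ^^ n) \<theta> | n. True}"

definition xi :: "('b \<Rightarrow> 'b \<Rightarrow> real) \<Rightarrow> ('b \<Rightarrow> 'b) \<Rightarrow> 'b \<Rightarrow> 'b \<Rightarrow> real \<Rightarrow> nat \<Rightarrow> nat" where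
  "xi d f x y t n = card {i \<in> {0..<n}. d ((f ^^ i) x) ((f ^^ i) y) < t}"

definition F_lower :: "('b \<Rightarrow> 'b \<Rightarrow> real) \<Rightarrow> ('b \<Rightarrow> 'b) \<Rightarrow> 'b \<Rightarrow> 'b \<Rightarrow> real \<Rightarrow> ereal" where
  "F_lower d f x y t = liminf (\<lambda>n. ereal (real (xi d f x y t n) / real n))"

definition F_upper :: "('b \<Rightarrow> 'b \<Rightarrow> real) \<Rightarrow> ('b \<Rightarrow> 'b) \<Rightarrow> 'b \<Rightarrow> 'b \<Rightarrow> real \<Rightarrow> ereal" where
  "F_upper d f x y t = limsup (\<lambda>n. ereal (real (xi d f x y t n) / real n))"

definition uniform_distributional_chaotic ::
  "'b set \<Rightarrow> ('b \<Rightarrow> 'b \<Rightarrow> real) \<Rightarrow> ('b \<Rightarrow> 'b) \<Rightarrow> bool" where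
  "uniform_distributional_chaotic S d f \<longleftrightarrow>
     (\<exists>A \<subseteq> S. uncountable A \<and> (\<exists>\<epsilon>>0. \<forall>x\<in>A. \<forall>y\<in>A. x \<noteq> y \<longrightarrow>
        (\<forall>s>0. F_upper d f x y s = 1) \<and> F_lower d f x y \<epsilon> = 0))"

end

theory Submission
  imports Defs
begin

lemma proj_cont:
  assumes "\<gamma> \<in> \<Gamma>"
  shows "continuous_map (prod_topology (product_topology (\<lambda>_. discrete_topology X) \<Gamma>) (product_topology (\<lambda>_. discrete_topology X) \<Gamma>))
           (discrete_topology (X \<times> X)) (\<lambda>p. (fst p \<gamma>, snd p \<gamma>))"
proof -
  have c: "continuous_map (product_topology (\<lambda>_. discrete_topology X) \<Gamma>) (discrete_topology X) (\<lambda>u. u \<gamma>)"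
    using continuous_map_product_projection[OF assms] by blast
  have c1: "continuous_map (prod_topology (product_topology (\<lambda>_. discrete_topology X) \<Gamma>) (product_topology (\<lambda>_. discrete_topology X) \<Gamma>)) (discrete_topology X) ((\<lambda>u. u \<gamma>) \<circ> fst)"
    by (rule continuous_map_compose[OF continuous_map_fst c])
  have c2: "continuous_map (prod_topology (product_topology (\<lambda>_. discrete_topology X) \<Gamma>) (product_topology (\<lambda>_. discrete_topology X) \<Gamma>)) (discrete_topology X) ((\<lambda>u. u \<gamma>) \<circ> snd)"
    by (rule continuous_map_compose[OF continuous_map_snd c])
  show ?thesis unfolding prod_topology_discrete_topology continuous_map_pairwise
    using c1 c2 by (simp add: o_def)
qed

lemma topo_part:
  fixes d :: "('g \<Rightarrow> 'a) \<Rightarrow> ('g \<Rightarrow> 'a) \<Rightarrow> real"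
  assumes fin: "finite X" and MS: "Metric_space (PiE \<Gamma> (\<lambda>_. X)) d"
    and top: "Metric_space.mtopology (PiE \<Gamma> (\<lambda>_. X)) d = product_topology (\<lambda>_. discrete_topology X) \<Gamma>"
  shows "\<theta> \<in> \<Gamma> \<Longrightarrow> \<exists>\<epsilon>>0. \<forall>u\<in>PiE \<Gamma> (\<lambda>_. X). \<forall>v\<in>PiE \<Gamma> (\<lambda>_. X). u \<theta> \<noteq> v \<theta> \<longrightarrow> \<epsilon> \<le> d u v"
    and "s > 0 \<Longrightarrow> \<exists>F. finite F \<and> F \<subseteq> \<Gamma> \<and> (\<forall>u\<in>PiE \<Gamma> (\<lambda>_. X). \<forall>v\<in>PiE \<Gamma> (\<lambda>_. X). (\<forall>\<gamma>\<in>F. u \<gamma> = v \<gamma>) \<longrightarrow> d u v < s)"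
proof -
  let ?K = "PiE \<Gamma> (\<lambda>_. X)"
  let ?T = "product_topology (\<lambda>_. discrete_topology X) \<Gamma>"
  let ?P = "prod_topology ?T ?T"
  have tsP: "topspace ?P = ?K \<times> ?K" by simp
  have cd: "continuous_map ?P euclideanreal (\<lambda>(x,y). d x y)"
    using continuous_map_metric[of "metric (?K, d)"] MS top
    by (simp add: Metric_space.mdist_metric Metric_space.mtopology_of)
  have cT: "compact_space ?T"
    using fin by (simp add: compact_space_product_topology compact_space_discrete_topology)
  have cP: "compact_space ?P"
    using cT by (simp add: compact_space_prod_topology)
  show "\<exists>\<epsilon>>0. \<forall>u\<in>?K. \<forall>v\<in>?K. u \<theta> \<noteq> v \<theta> \<longrightarrow> \<epsilon> \<le> d u v" if th: "\<theta> \<in> \<Gamma>"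
  proof -
    define S where "S = {p \<in> topspace ?P. (\<lambda>p. (fst p \<theta>, snd p \<theta>)) p \<in> {(a,b). a \<in> X \<and> b \<in> X \<and> a \<noteq> b}}"
    have "closedin ?P S" unfolding S_def
      by (rule closedin_continuous_map_preimage[OF proj_cont[OF th]]) auto
    then have "compactin ?P S" using cP closedin_compact_space by blast
    then have "compactin euclideanreal ((\<lambda>(x,y). d x y) ` S)" using image_compactin cd by blast
    then have cpt: "compact ((\<lambda>(x,y). d x y) ` S)" by simp
    show ?thesis
    proof (cases "S = {}")
      case True
      have "\<forall>u\<in>?K. \<forall>v\<in>?K. u \<theta> \<noteq> v \<theta> \<longrightarrow> 1 \<le> d u v"
      proof (intro ballI impI)
        fix u v assume "u \<in> ?K" "v \<in> ?K" "u \<theta> \<noteq> v \<theta>"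
        then have "(u,v) \<in> S" unfolding S_def using th by (auto simp: PiE_iff)
        then show "1 \<le> d u v" using True by simp
      qed
      then show ?thesis by (intro exI[of _ 1]) simp
    next
      case False
      then obtain m where m: "m \<in> (\<lambda>(x,y). d x y) ` S" "\<forall>y \<in> (\<lambda>(x,y). d x y) ` S. m \<le> y"
        using compact_attains_inf[OF cpt] by blast
      then obtain u v where uv: "(u,v) \<in> S" "m = d u v" by auto
      have "u \<noteq> v" using uv unfolding S_def by auto
      moreover have "u \<in> ?K" "v \<in> ?K" using uv unfolding S_def by auto
      ultimately have "m > 0" using uv MS by (simp add: Metric_space.mdist_pos_less)
      moreover have "\<forall>u\<in>?K. \<forall>v\<in>?K. u \<theta> \<noteq> v \<theta> \<longrightarrow> m \<le> d u v"
      proof (intro ballI impI)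
        fix u v assume "u \<in> ?K" "v \<in> ?K" "u \<theta> \<noteq> v \<theta>"
        then have "(u,v) \<in> S" unfolding S_def using th by (auto simp: PiE_iff)
        then show "m \<le> d u v" using m by force
      qed
      ultimately show ?thesis by blast
    qed
  qed
  show "\<exists>F. finite F \<and> F \<subseteq> \<Gamma> \<and> (\<forall>u\<in>?K. \<forall>v\<in>?K. (\<forall>\<gamma>\<in>F. u \<gamma> = v \<gamma>) \<longrightarrow> d u v < s)" if s: "s > 0"
  proof -
    define S where "S = {p \<in> topspace ?P. (\<lambda>(x,y). d x y) p \<in> {s..}}"
    have "closedin ?P S" unfolding S_def
      by (rule closedin_continuous_map_preimage[OF cd]) auto
    then have cS: "compactin ?P S" using cP closedin_compact_space by blast
    define U where "U \<gamma> = {p \<in> topspace ?P. (\<lambda>p. (fst p \<gamma>, snd p \<gamma>)) p \<in> {(a,b). a \<in> X \<and> b \<in> X \<and> a \<noteq> b}}" for \<gamma>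
    have oU: "openin ?P (U \<gamma>)" if "\<gamma> \<in> \<Gamma>" for \<gamma> unfolding U_def
      by (rule openin_continuous_map_preimage[OF proj_cont[OF that]]) auto
    have cov: "S \<subseteq> \<Union>(U ` \<Gamma>)"
    proof
      fix p assume p: "p \<in> S"
      obtain u v where [simp]: "p = (u,v)" by force
      have uv: "u \<in> ?K" "v \<in> ?K" "s \<le> d u v" using p unfolding S_def by auto
      then have "u \<noteq> v" using s MS by (auto simp: Metric_space.mdist_zero)
      then obtain \<gamma> where "u \<gamma> \<noteq> v \<gamma>" by blast
      moreover then have "\<gamma> \<in> \<Gamma>" using uv by (metis PiE_E)
      ultimately show "p \<in> \<Union>(U ` \<Gamma>)" using uv unfolding U_def by (auto simp: PiE_iff)
    qed
    have h: "\<forall>V\<in>U ` \<Gamma>. openin ?P V" using oU by blast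
    have "\<exists>\<F>. finite \<F> \<and> \<F> \<subseteq> U ` \<Gamma> \<and> S \<subseteq> \<Union>\<F>"
      using cS unfolding compactin_def apply (elim conjE)
      apply (drule spec[of _ "U ` \<Gamma>"]) using h cov by blast
    then obtain \<F> where F: "finite \<F>" "\<F> \<subseteq> U ` \<Gamma>" "S \<subseteq> \<Union>\<F>" by blast
    then obtain F where F2: "F \<subseteq> \<Gamma>" "finite F" "\<F> = U ` F"
      by (meson finite_subset_image)
    have "\<forall>u\<in>?K. \<forall>v\<in>?K. (\<forall>\<gamma>\<in>F. u \<gamma> = v \<gamma>) \<longrightarrow> d u v < s"
    proof (intro ballI impI)
      fix u v assume uv: "u \<in> ?K" "v \<in> ?K" "\<forall>\<gamma>\<in>F. u \<gamma> = v \<gamma>"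
      show "d u v < s"
      proof (rule ccontr)
        assume "\<not> d u v < s"
        then have "(u,v) \<in> S" unfolding S_def using uv by auto
        then obtain \<gamma> where "\<gamma> \<in> F" "(u,v) \<in> U \<gamma>" using F F2 by auto
        then show False using uv unfolding U_def by auto
      qed
    qed
    then show ?thesis using F2 by blast
  qed
qed



lemma limsup_one:
  fixes r :: "nat \<Rightarrow> real"
  assumes le: "\<And>n. r n \<le> 1" and fr: "\<And>\<delta> N. \<delta> > 0 \<Longrightarrow> \<exists>n\<ge>N. r n \<ge> 1 - \<delta>"
  shows "limsup (\<lambda>n. ereal (r n)) = 1"
proof (rule antisym)
  show "limsup (\<lambda>n. ereal (r n)) \<le> 1" by (rule Limsup_bounded) (use le in auto)
  show "1 \<le> limsup (\<lambda>n. ereal (r n))"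
  proof (rule ccontr)
    assume "\<not> 1 \<le> limsup (\<lambda>n. ereal (r n))"
    then have "limsup (\<lambda>n. ereal (r n)) < 1" by simp
    then obtain y where y: "limsup (\<lambda>n. ereal (r n)) < y" "y < 1" using dense by blast
    have ev: "eventually (\<lambda>n. ereal (r n) < y) sequentially" using Limsup_lessD[OF y(1)] by simp
    obtain q where q: "y = ereal q" using y by (cases y) auto
    have "q < 1" using y q by simp
    obtain N where N: "\<forall>n\<ge>N. ereal (r n) < y" using ev unfolding eventually_sequentially by blast
    obtain n where "n \<ge> N" "r n \<ge> 1 - (1 - q)" using fr[of "1 - q" N] \<open>q < 1\<close> by auto
    then show False using N q by auto
  qed
qed

lemma liminf_zero:
  fixes r :: "nat \<Rightarrow> real"
  assumes ge: "\<And>n. 0 \<le> r n" and fr: "\<And>\<delta> N. \<delta> > 0 \<Longrightarrow> \<exists>n\<ge>N. r n \<le> \<delta>"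
  shows "liminf (\<lambda>n. ereal (r n)) = 0"
proof (rule antisym)
  show "0 \<le> liminf (\<lambda>n. ereal (r n))" by (rule Liminf_bounded) (use ge in auto)
  show "liminf (\<lambda>n. ereal (r n)) \<le> 0"
  proof (rule ccontr)
    assume "\<not> liminf (\<lambda>n. ereal (r n)) \<le> 0"
    then have "0 < liminf (\<lambda>n. ereal (r n))" by simp
    then obtain y where y: "0 < y" "y < liminf (\<lambda>n. ereal (r n))" using dense by blast
    then have ev: "eventually (\<lambda>n. ereal (r n) > y) sequentially" by (intro less_LiminfD)
    have "y \<noteq> \<infinity>" using y by auto
    then obtain q where q: "y = ereal q" using y by (cases y) auto
    have "q > 0" using y q by simp
    obtain N where N: "\<forall>n\<ge>N. ereal (r n) > y" using ev unfolding eventually_sequentially by blast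
    obtain n where "n \<ge> N" "r n \<le> q" using fr[of q N] \<open>q > 0\<close> by auto
    then show False using N q by auto
  qed
qed

definition blk :: "nat \<Rightarrow> nat" where "blk i = (LEAST k. i < (fact (Suc k) :: nat))"

lemma blk_eq:
  assumes "(fact k :: nat) \<le> i" "i < (fact (Suc k) :: nat)"
  shows "blk i = k"
  unfolding blk_def
proof (rule Least_equality)
  show "i < fact (Suc k)" by fact
  fix k' assume "i < (fact (Suc k') :: nat)"
  show "k \<le> k'"
  proof (rule ccontr)
    assume "\<not> k \<le> k'"
    then have "Suc k' \<le> k" by simp
    then have "(fact (Suc k') :: nat) \<le> fact k" by (rule fact_mono)
    then show False using assms \<open>i < fact (Suc k')\<close> by simp
  qed
qed

definition cseq :: "'a \<Rightarrow> 'a \<Rightarrow> (nat \<Rightarrow> bool) \<Rightarrow> nat \<Rightarrow> 'a" where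
  "cseq a b \<omega> i = (if odd (blk i) \<and> \<omega> (fst (prod_decode (blk i div 2))) then b else a)"

lemma cseq_even:
  assumes "(fact k :: nat) \<le> i" "i < (fact (Suc k) :: nat)" "even k"
  shows "cseq a b \<omega> i = a"
  using blk_eq[OF assms(1,2)] assms(3) by (simp add: cseq_def)

lemma cseq_odd:
  assumes "(fact k :: nat) \<le> i" "i < (fact (Suc k) :: nat)" "k = 2 * prod_encode (j, t) + 1"
  shows "cseq a b \<omega> i = (if \<omega> j then b else a)"
  using blk_eq[OF assms(1,2)] assms(3) by (simp add: cseq_def)

lemma fact_Suc_nat: "(fact (Suc k) :: nat) = Suc k * fact k" by simp

lemma dens_disagree:
  assumes "\<omega> j \<noteq> \<omega>' j" "a \<noteq> b" "\<delta> > 0"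
  shows "\<exists>n\<ge>N. real (card {i\<in>{0..<n}. cseq a b \<omega> i = cseq a b \<omega>' i}) \<le> \<delta> * real n"
proof -
  define t where "t = N + nat \<lceil>1 / \<delta>\<rceil>"
  define k where "k = 2 * prod_encode (j, t) + 1"
  define n where "n = (fact (Suc k) :: nat)"
  have tk: "t \<le> k" unfolding k_def using le_prod_encode_2[of t j] by simp
  have "Suc k \<le> n" unfolding n_def by (metis fact_ge_self)
  then have "N \<le> n" using tk unfolding t_def by simp
  have sub: "{i\<in>{0..<n}. cseq a b \<omega> i = cseq a b \<omega>' i} \<subseteq> {0..<fact k}"
  proof
    fix i assume i: "i \<in> {i\<in>{0..<n}. cseq a b \<omega> i = cseq a b \<omega>' i}"
    show "i \<in> {0..<fact k}"
    proof (rule ccontr)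
      assume "i \<notin> {0..<fact k}"
      then have "fact k \<le> i" by simp
      have i2: "i < fact (Suc k)" using i unfolding n_def by simp
      have e1: "cseq a b \<omega> i = (if \<omega> j then b else a)"
        by (rule cseq_odd[OF \<open>fact k \<le> i\<close> i2 k_def])
      have e2: "cseq a b \<omega>' i = (if \<omega>' j then b else a)"
        by (rule cseq_odd[OF \<open>fact k \<le> i\<close> i2 k_def])
      show False using e1 e2 i assms by (auto split: if_splits)
    qed
  qed
  have "card {i\<in>{0..<n}. cseq a b \<omega> i = cseq a b \<omega>' i} \<le> fact k"
    using card_mono[OF _ sub] by simp
  then have c: "real (card {i\<in>{0..<n}. cseq a b \<omega> i = cseq a b \<omega>' i}) \<le> real (fact k)" by linarith
  have "1 / \<delta> \<le> real t" unfolding t_def by linarith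
  then have "1 \<le> \<delta> * real t" using assms(3) by (simp add: field_simps)
  moreover have "\<delta> * real t \<le> \<delta> * real (Suc k)" using tk assms(3)
    by (intro mult_left_mono) auto
  ultimately have "1 \<le> \<delta> * real (Suc k)" by linarith
  then have "1 * real (fact k :: nat) \<le> \<delta> * real (Suc k) * real (fact k :: nat)"
    by (intro mult_right_mono) auto
  then have "real (fact k :: nat) \<le> \<delta> * real (Suc k) * real (fact k :: nat)" by simp
  also have "\<dots> = \<delta> * real n" unfolding n_def fact_Suc_nat by (simp add: algebra_simps)
  finally show ?thesis using c \<open>N \<le> n\<close> by (intro exI[of _ n]) auto
qed

lemma dens_agree:
  assumes "\<delta> > 0"
  shows "\<exists>n\<ge>N. real (card {i\<in>{0..<n}. D \<le> i \<and> (\<forall>j. i - D \<le> j \<and> j \<le> i + M \<longrightarrow> cseq a b \<omega> j = cseq a b \<omega>' j)}) \<ge> (1 - \<delta>) * real n"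
proof (cases "\<delta> \<le> 1")
  case False
  then have "(1 - \<delta>) * real N \<le> 0" by (intro mult_nonpos_nonneg) auto
  then show ?thesis by (intro exI[of _ N]) (auto intro: order_trans)
next
  case dl: True
  define t where "t = N + nat \<lceil>(1 + D + M) / \<delta>\<rceil>"
  define k where "k = 2 * t"
  define n where "n = (fact (Suc k) :: nat)"
  have tk: "t \<le> k" unfolding k_def by simp
  have "Suc k \<le> n" unfolding n_def by (metis fact_ge_self)
  then have "N \<le> n" using tk unfolding t_def by simp
  let ?G = "{i\<in>{0..<n}. D \<le> i \<and> (\<forall>j. i - D \<le> j \<and> j \<le> i + M \<longrightarrow> cseq a b \<omega> j = cseq a b \<omega>' j)}"
  have sub: "{fact k + D..<n - M} \<subseteq> ?G"
  proof
    fix i assume i: "i \<in> {fact k + D..<n - M}"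
    have "cseq a b \<omega> j = cseq a b \<omega>' j" if "i - D \<le> j" "j \<le> i + M" for j
    proof -
      have "fact k \<le> j" "j < fact (Suc k)" using i that unfolding n_def by auto
      then show ?thesis using cseq_even[of k j a b \<omega>] cseq_even[of k j a b \<omega>'] unfolding k_def by simp
    qed
    then show "i \<in> ?G" using i by auto
  qed
  have "card {fact k + D..<n - M} \<le> card ?G" by (rule card_mono[OF _ sub]) simp
  then have c: "real (n - M - (fact k + D)) \<le> real (card ?G)" by simp
  have "(1 + D + M) / \<delta> \<le> real t" unfolding t_def by linarith
  then have "1 + D + M \<le> \<delta> * real t" using assms by (simp add: field_simps)
  moreover have "\<delta> * real t \<le> \<delta> * real (Suc k)" using tk assms
    by (intro mult_left_mono) auto
  ultimately have h1: "1 + D + M \<le> \<delta> * real (Suc k)" by linarith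
  have f1: "1 \<le> real (fact k :: nat)" by simp
  have "real (fact k :: nat) + D + M \<le> (1 + D + M) * real (fact k :: nat)"
  proof -
    have "real (D + M) * 1 \<le> real (D + M) * real (fact k :: nat)"
      using f1 by (intro mult_left_mono) auto
    then show ?thesis by (simp add: algebra_simps)
  qed
  also have "\<dots> \<le> \<delta> * real (Suc k) * real (fact k :: nat)"
    using h1 by (intro mult_right_mono) auto
  also have "\<dots> = \<delta> * real n" unfolding n_def fact_Suc_nat by (simp add: algebra_simps)
  finally have h2: "real (fact k :: nat) + D + M \<le> \<delta> * real n" .
  have "\<delta> * real n \<le> real n" using dl mult_right_mono[of \<delta> 1 "real n"] by simp
  then have "real (M + (fact k + D)) \<le> real n" using h2 by simp
  then have le: "M + (fact k + D) \<le> n" by (simp only: of_nat_le_iff)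
  then have "real (n - M - (fact k + D)) = real n - M - fact k - D" by (simp add: of_nat_diff)
  then show ?thesis using c h2 \<open>N \<le> n\<close> by (intro exI[of _ n]) (auto simp: algebra_simps)
qed



lemma unc_bool: "uncountable (UNIV :: (nat \<Rightarrow> bool) set)"
proof
  assume "countable (UNIV :: (nat \<Rightarrow> bool) set)"
  then obtain f :: "nat \<Rightarrow> (nat \<Rightarrow> bool)" where f: "range f = UNIV"
    using uncountable_def by blast
  then obtain n where "f n = (\<lambda>k. \<not> f k k)" by (metis UNIV_I imageE)
  then have "f n n = (\<not> f n n)" by metis
  then show False by simp
qed

lemma funpow_add_app: "(\<phi> ^^ (a + b)) x = (\<phi> ^^ a) ((\<phi> ^^ b) x)"
  by (simp add: funpow_add)

lemma orbit_inj:
  fixes \<phi> :: "'a \<Rightarrow> 'a"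
  assumes "infinite {(\<phi> ^^ n) \<theta> | n. True}"
  shows "inj (\<lambda>n. (\<phi> ^^ n) \<theta>)"
proof (rule ccontr)
  assume "\<not> inj (\<lambda>n. (\<phi> ^^ n) \<theta>)"
  then obtain m n where mn: "m \<noteq> n" "(\<phi> ^^ m) \<theta> = (\<phi> ^^ n) \<theta>" unfolding inj_def by blast
  have "\<exists>m n. m < n \<and> (\<phi> ^^ m) \<theta> = (\<phi> ^^ n) \<theta>"
    using mn by (metis linorder_neqE_nat)
  then obtain m n where mn: "m < n" "(\<phi> ^^ m) \<theta> = (\<phi> ^^ n) \<theta>" by blast
  have all: "(\<phi> ^^ k) \<theta> \<in> (\<lambda>n. (\<phi> ^^ n) \<theta>) ` {..<n}" for k
  proof (induction k rule: less_induct)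
    case (less k)
    show ?case
    proof (cases "k < n")
      case True then show ?thesis by auto
    next
      case False
      then have "(\<phi> ^^ k) \<theta> = (\<phi> ^^ (k - n)) ((\<phi> ^^ n) \<theta>)"
        using funpow_add_app[where \<phi>=\<phi> and a="k - n" and b=n and x=\<theta>] by simp
      also have "\<dots> = (\<phi> ^^ (k - n)) ((\<phi> ^^ m) \<theta>)" using mn by simp
      also have "\<dots> = (\<phi> ^^ (k - n + m)) \<theta>" using funpow_add_app[where \<phi>=\<phi> and a="k - n" and b=m and x=\<theta>] by simp
      finally show ?thesis using less[of "k - n + m"] mn False by simp
    qed
  qed
  have "{(\<phi> ^^ n) \<theta> | n. True} \<subseteq> (\<lambda>n. (\<phi> ^^ n) \<theta>) ` {..<n}" using all by blast
  then have "finite {(\<phi> ^^ n) \<theta> | n. True}" by (rule finite_subset) simp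
  then show False using assms by simp
qed

lemma two_elems:
  assumes "finite X" "card X \<ge> 2"
  shows "\<exists>a b. a \<in> X \<and> b \<in> X \<and> a \<noteq> b"
proof -
  have "X \<noteq> {}" using assms by auto
  then obtain a where a: "a \<in> X" by blast
  have c1: "card (X - {a}) \<ge> 1" using assms a by (simp add: card_Diff_singleton)
  have "0 < card (X - {a})" using c1 by simp
  then have "X - {a} \<noteq> {}" using card_gt_0_iff by blast
  then show ?thesis using a by blast
qed

theorem lemma3p4:
  fixes X :: "'a set" and \<Gamma> :: "'g set" and \<phi> :: "'g \<Rightarrow> 'g"
    and d :: "('g \<Rightarrow> 'a) \<Rightarrow> ('g \<Rightarrow> 'a) \<Rightarrow> real"
  assumes "finite X" and "card X \<ge> 2"
    and "countable \<Gamma>" and "\<Gamma> \<noteq> {}"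
    and "\<phi> \<in> \<Gamma> \<rightarrow> \<Gamma>"
    and "\<exists>\<theta>\<in>\<Gamma>. non_quasi_periodic \<phi> \<theta>"
    and "Metric_space (PiE \<Gamma> (\<lambda>_. X)) d"
    and "Metric_space.mtopology (PiE \<Gamma> (\<lambda>_. X)) d
           = product_topology (\<lambda>_. discrete_topology X) \<Gamma>"
  shows "uniform_distributional_chaotic (PiE \<Gamma> (\<lambda>_. X)) d (shift_map \<phi> \<Gamma>)"
proof -
  let ?K = "PiE \<Gamma> (\<lambda>_. X)"
  let ?f = "shift_map \<phi> \<Gamma>"
  obtain \<theta> where th: "\<theta> \<in> \<Gamma>" "non_quasi_periodic \<phi> \<theta>" using assms(6) by blast
  define ths where "ths n = (\<phi> ^^ n) \<theta>" for n
  have injt: "inj ths" unfolding ths_def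
    by (rule orbit_inj[OF th(2)[unfolded non_quasi_periodic_def]])
  obtain a b where ab: "a \<in> X" "b \<in> X" "a \<noteq> b" using two_elems assms(1,2) by blast
  have phiG: "(\<phi> ^^ i) \<gamma> \<in> \<Gamma>" if "\<gamma> \<in> \<Gamma>" for \<gamma> i
    using that assms(5) by (induction i) auto
  have thsG: "ths i \<in> \<Gamma>" for i unfolding ths_def using phiG th(1) .
  have iter: "(?f ^^ i) x = (\<lambda>\<gamma>\<in>\<Gamma>. x ((\<phi> ^^ i) \<gamma>))" if "x \<in> extensional \<Gamma>" for x i
  proof (induction i)
    case 0 then show ?case using that by (simp add: extensional_restrict)
  next
    case (Suc i)
    have "(?f ^^ Suc i) x = ?f ((?f ^^ i) x)" by simp
    also have "\<dots> = (\<lambda>\<alpha>\<in>\<Gamma>. (\<lambda>\<gamma>\<in>\<Gamma>. x ((\<phi> ^^ i) \<gamma>)) (\<phi> \<alpha>))" unfolding Suc shift_map_def ..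
    also have "\<dots> = (\<lambda>\<gamma>\<in>\<Gamma>. x ((\<phi> ^^ Suc i) \<gamma>))"
    proof (rule restrict_ext)
      fix \<alpha> assume "\<alpha> \<in> \<Gamma>"
      then have "\<phi> \<alpha> \<in> \<Gamma>" using assms(5) by auto
      then show "(\<lambda>\<gamma>\<in>\<Gamma>. x ((\<phi> ^^ i) \<gamma>)) (\<phi> \<alpha>) = x ((\<phi> ^^ Suc i) \<alpha>)"
        by (simp add: funpow_Suc_right del: funpow.simps)
    qed
    finally show ?case .
  qed
  have iterK: "(?f ^^ i) x \<in> ?K" if "x \<in> ?K" for x i
    using that iter[of x i] phiG by (auto simp: PiE_iff)
  define pt where "pt \<omega> = (\<lambda>\<gamma>\<in>\<Gamma>. if \<gamma> \<in> range ths then cseq a b \<omega> (inv ths \<gamma>) else a)" for \<omega>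
  have ptK: "pt \<omega> \<in> ?K" for \<omega> unfolding pt_def using ab by (auto simp: PiE_iff cseq_def)
  have val: "(?f ^^ i) (pt \<omega>) \<gamma> = pt \<omega> ((\<phi> ^^ i) \<gamma>)" if "\<gamma> \<in> \<Gamma>" for i \<omega> \<gamma>
    using iter[of "pt \<omega>" i] ptK[of \<omega>] that by (simp add: PiE_iff)
  have ptths: "pt \<omega> (ths j) = cseq a b \<omega> j" for \<omega> j
    unfolding pt_def using thsG[of j] injt by simp
  have valth: "(?f ^^ i) (pt \<omega>) \<theta> = cseq a b \<omega> i" for i \<omega>
    using val[OF th(1)] ptths unfolding ths_def by simp
  obtain \<epsilon> where eps: "\<epsilon> > 0" "\<forall>u\<in>?K. \<forall>v\<in>?K. u \<theta> \<noteq> v \<theta> \<longrightarrow> \<epsilon> \<le> d u v"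
    using topo_part(1)[OF assms(1,7,8) th(1)] by blast
  have inj_pt: "inj pt"
  proof (rule injI)
    fix \<omega> \<omega>' assume eq: "pt \<omega> = pt \<omega>'"
    show "\<omega> = \<omega>'"
    proof (rule ccontr)
      assume "\<omega> \<noteq> \<omega>'"
      then obtain j where j: "\<omega> j \<noteq> \<omega>' j" by blast
      define k where "k = 2 * prod_encode (j, 0) + 1"
      have i1: "(fact k :: nat) \<le> fact k" "(fact k :: nat) < fact (Suc k)"
        by (auto simp: k_def)
      have "pt \<omega> (ths (fact k)) = pt \<omega>' (ths (fact k))" using eq by simp
      then have "cseq a b \<omega> (fact k) = cseq a b \<omega>' (fact k)" by (simp only: ptths)
      then show False using cseq_odd[OF i1 k_def, of a b \<omega>] cseq_odd[OF i1 k_def, of a b \<omega>'] j ab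
        by (auto split: if_splits)
    qed
  qed
  have unc: "uncountable (range pt)"
  proof
    assume "countable (range pt)"
    then have "countable (UNIV :: (nat \<Rightarrow> bool) set)"
      by (rule countable_image_inj_on[OF _ inj_pt])
    then show False using unc_bool by blast
  qed
  have pair: "(\<forall>s>0. F_upper d ?f (pt \<omega>) (pt \<omega>') s = 1) \<and> F_lower d ?f (pt \<omega>) (pt \<omega>') \<epsilon> = 0"
    if ne: "\<omega> \<noteq> \<omega>'" for \<omega> \<omega>'
  proof
    obtain j where j: "\<omega> j \<noteq> \<omega>' j" using ne by blast
    show "F_lower d ?f (pt \<omega>) (pt \<omega>') \<epsilon> = 0"
      unfolding F_lower_def
    proof (rule liminf_zero)
      fix n show "0 \<le> real (xi d ?f (pt \<omega>) (pt \<omega>') \<epsilon> n) / real n" by simp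
    next
      fix \<delta> :: real and N :: nat assume "\<delta> > 0"
      then obtain n where n: "n \<ge> N" "real (card {i\<in>{0..<n}. cseq a b \<omega> i = cseq a b \<omega>' i}) \<le> \<delta> * real n"
        using dens_disagree[where \<omega>=\<omega> and \<omega>'=\<omega>' and j=j and a=a and b=b and \<delta>=\<delta> and N=N, OF j ab(3) \<open>\<delta> > 0\<close>] by blast
      have sub: "{i\<in>{0..<n}. d ((?f ^^ i) (pt \<omega>)) ((?f ^^ i) (pt \<omega>')) < \<epsilon>} \<subseteq> {i\<in>{0..<n}. cseq a b \<omega> i = cseq a b \<omega>' i}"
      proof
        fix i assume i: "i \<in> {i\<in>{0..<n}. d ((?f ^^ i) (pt \<omega>)) ((?f ^^ i) (pt \<omega>')) < \<epsilon>}"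
        have u: "(?f ^^ i) (pt \<omega>) \<in> ?K" "(?f ^^ i) (pt \<omega>') \<in> ?K" using iterK[OF ptK] by auto
        have dlt: "d ((?f ^^ i) (pt \<omega>)) ((?f ^^ i) (pt \<omega>')) < \<epsilon>" using i by simp
        have "(?f ^^ i) (pt \<omega>) \<theta> = (?f ^^ i) (pt \<omega>') \<theta>"
        proof (rule ccontr)
          assume ne: "(?f ^^ i) (pt \<omega>) \<theta> \<noteq> (?f ^^ i) (pt \<omega>') \<theta>"
          have "\<epsilon> \<le> d ((?f ^^ i) (pt \<omega>)) ((?f ^^ i) (pt \<omega>'))"
            using eps(2) u ne by blast
          then show False using dlt by simp
        qed
        then show "i \<in> {i\<in>{0..<n}. cseq a b \<omega> i = cseq a b \<omega>' i}" using i valth by simp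
      qed
      have "xi d ?f (pt \<omega>) (pt \<omega>') \<epsilon> n \<le> card {i\<in>{0..<n}. cseq a b \<omega> i = cseq a b \<omega>' i}"
        unfolding xi_def by (rule card_mono[OF _ sub]) simp
      then have "real (xi d ?f (pt \<omega>) (pt \<omega>') \<epsilon> n) \<le> \<delta> * real n" using n(2) by linarith
      then have "real (xi d ?f (pt \<omega>) (pt \<omega>') \<epsilon> n) / real n \<le> \<delta>"
        using \<open>\<delta> > 0\<close> by (cases "n = 0") (auto simp: divide_le_eq mult.commute)
      then show "\<exists>n\<ge>N. real (xi d ?f (pt \<omega>) (pt \<omega>') \<epsilon> n) / real n \<le> \<delta>" using n(1) by blast
    qed
    show "\<forall>s>0. F_upper d ?f (pt \<omega>) (pt \<omega>') s = 1"
    proof (intro allI impI)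
      fix s :: real assume "s > 0"
      obtain F where F: "finite F" "F \<subseteq> \<Gamma>"
        "\<forall>u\<in>?K. \<forall>v\<in>?K. (\<forall>\<gamma>\<in>F. u \<gamma> = v \<gamma>) \<longrightarrow> d u v < s"
        using topo_part(2)[OF assms(1,7,8) \<open>s > 0\<close>] by blast
      define kk where "kk \<gamma> = fst (SOME p. (\<phi> ^^ fst p) \<gamma> = ths (snd p))" for \<gamma>
      define mm where "mm \<gamma> = snd (SOME p. (\<phi> ^^ fst p) \<gamma> = ths (snd p))" for \<gamma>
      have kkmm: "(\<phi> ^^ kk \<gamma>) \<gamma> = ths (mm \<gamma>)" if "\<exists>k m. (\<phi> ^^ k) \<gamma> = ths m" for \<gamma>
      proof -
        have "\<exists>p. (\<phi> ^^ fst p) \<gamma> = ths (snd p)" using that by auto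
        then show ?thesis unfolding kk_def mm_def by (rule someI_ex)
      qed
      define D where "D = sum kk F"
      define M where "M = sum mm F"
      have kD: "kk \<gamma> \<le> D" if "\<gamma> \<in> F" for \<gamma> unfolding D_def using that F(1) by (simp add: member_le_sum)
      have mM: "mm \<gamma> \<le> M" if "\<gamma> \<in> F" for \<gamma> unfolding M_def using that F(1) by (simp add: member_le_sum)
      let ?G = "\<lambda>n. {i\<in>{0..<n}. D \<le> i \<and> (\<forall>j. i - D \<le> j \<and> j \<le> i + M \<longrightarrow> cseq a b \<omega> j = cseq a b \<omega>' j)}"
      have agree: "(?f ^^ i) (pt \<omega>) \<gamma> = (?f ^^ i) (pt \<omega>') \<gamma>"
        if i: "D \<le> i" "\<forall>j. i - D \<le> j \<and> j \<le> i + M \<longrightarrow> cseq a b \<omega> j = cseq a b \<omega>' j" and g: "\<gamma> \<in> F" for i \<gamma>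
      proof -
        have gG: "\<gamma> \<in> \<Gamma>" using g F(2) by blast
        show ?thesis
        proof (cases "\<exists>k m. (\<phi> ^^ k) \<gamma> = ths m")
          case True
          note km = kkmm[OF True]
          have "kk \<gamma> \<le> i" using kD[OF g] i(1) by simp
          then have "(\<phi> ^^ i) \<gamma> = (\<phi> ^^ (i - kk \<gamma>)) ((\<phi> ^^ kk \<gamma>) \<gamma>)"
            using funpow_add_app[where \<phi>=\<phi> and a="i - kk \<gamma>" and b="kk \<gamma>" and x=\<gamma>] by simp
          also have "\<dots> = ths (i - kk \<gamma> + mm \<gamma>)"
            unfolding km ths_def using funpow_add_app[where \<phi>=\<phi> and a="i - kk \<gamma>" and b="mm \<gamma>" and x=\<theta>] by simp
          finally have e: "(\<phi> ^^ i) \<gamma> = ths (i - kk \<gamma> + mm \<gamma>)" .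
          have "i - D \<le> i - kk \<gamma> + mm \<gamma>" "i - kk \<gamma> + mm \<gamma> \<le> i + M"
            using kD[OF g] mM[OF g] by auto
          then have "cseq a b \<omega> (i - kk \<gamma> + mm \<gamma>) = cseq a b \<omega>' (i - kk \<gamma> + mm \<gamma>)" using i(2) by blast
          then show ?thesis using val[OF gG] e ptths by simp
        next
          case False
          then have "(\<phi> ^^ i) \<gamma> \<notin> range ths" by blast
          then show ?thesis using val[OF gG] phiG[OF gG] unfolding pt_def by simp
        qed
      qed
      show "F_upper d ?f (pt \<omega>) (pt \<omega>') s = 1"
        unfolding F_upper_def
      proof (rule limsup_one)
        fix n
        have "xi d ?f (pt \<omega>) (pt \<omega>') s n \<le> card {0..<n}"
          unfolding xi_def by (rule card_mono) auto
        then show "real (xi d ?f (pt \<omega>) (pt \<omega>') s n) / real n \<le> 1"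
          by (cases "n = 0") (auto simp: divide_le_eq)
      next
        fix \<delta> :: real and N :: nat assume "\<delta> > 0"
        then obtain n where n: "n \<ge> Suc N" "real (card (?G n)) \<ge> (1 - \<delta>) * real n"
          using dens_agree[where \<delta>=\<delta> and N="Suc N" and D=D and M=M and a=a and b=b and \<omega>=\<omega> and \<omega>'=\<omega>'] by blast
        have sub: "?G n \<subseteq> {i\<in>{0..<n}. d ((?f ^^ i) (pt \<omega>)) ((?f ^^ i) (pt \<omega>')) < s}"
        proof
          fix i assume i: "i \<in> ?G n"
          then have ii: "D \<le> i" "\<forall>j. i - D \<le> j \<and> j \<le> i + M \<longrightarrow> cseq a b \<omega> j = cseq a b \<omega>' j" by auto
          have ag: "\<forall>\<gamma>\<in>F. (?f ^^ i) (pt \<omega>) \<gamma> = (?f ^^ i) (pt \<omega>') \<gamma>"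
            using agree[OF ii] by blast
          have u: "(?f ^^ i) (pt \<omega>) \<in> ?K" "(?f ^^ i) (pt \<omega>') \<in> ?K" using iterK[OF ptK] by auto
          have "d ((?f ^^ i) (pt \<omega>)) ((?f ^^ i) (pt \<omega>')) < s"
            using F(3) u ag by blast
          then show "i \<in> {i\<in>{0..<n}. d ((?f ^^ i) (pt \<omega>)) ((?f ^^ i) (pt \<omega>')) < s}" using i by simp
        qed
        have "card (?G n) \<le> xi d ?f (pt \<omega>) (pt \<omega>') s n"
          unfolding xi_def by (rule card_mono[OF _ sub]) simp
        then have "(1 - \<delta>) * real n \<le> real (xi d ?f (pt \<omega>) (pt \<omega>') s n)" using n(2) by linarith
        then have "1 - \<delta> \<le> real (xi d ?f (pt \<omega>) (pt \<omega>') s n) / real n"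
          using n(1) by (simp add: le_divide_eq)
        then show "\<exists>n\<ge>N. 1 - \<delta> \<le> real (xi d ?f (pt \<omega>) (pt \<omega>') s n) / real n" using n(1)
          by (intro exI[of _ n]) auto
      qed
    qed
  qed
  have all: "\<forall>x\<in>range pt. \<forall>y\<in>range pt. x \<noteq> y \<longrightarrow> (\<forall>s>0. F_upper d ?f x y s = 1) \<and> F_lower d ?f x y \<epsilon> = 0"
  proof (intro ballI impI)
    fix x y assume "x \<in> range pt" "y \<in> range pt" "x \<noteq> y"
    then obtain \<omega> \<omega>' where "x = pt \<omega>" "y = pt \<omega>'" "\<omega> \<noteq> \<omega>'" by blast
    then show "(\<forall>s>0. F_upper d ?f x y s = 1) \<and> F_lower d ?f x y \<epsilon> = 0" using pair by blast
  qed
  have sub: "range pt \<subseteq> ?K" using ptK by blast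
  show ?thesis unfolding uniform_distributional_chaotic_def
    using sub unc eps(1) all by blast
qed


end
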